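(* Let $\mathcal W$ be a monotonic game on $[n]$ and $i\neq j$ players. Then the game $\hat{\mathcal W}$ obtained by imposing an asymmetric reciprocal strong YES-quarrel between $i$ and $j$ is quasi-monotonic (i.e. 1-monotonic).
   Context: Players are $[n]=\{1,\dots,n\}$. A binary voting game on $[n]$ is identified with its collection $\mathcal W\subseteq 2^{[n]}$ of winning sets ($S\in\mathcal W$ means the division in which exactly the members of $S$ vote YES has outcome YES). It is monotonic if $T\subseteq S$ and $T\in\mathcal W$ imply $S\in\mathcal W$. For an integer $k\ge0$, a game $\mathcal W$ is $k$-monotonic if for every $S\subseteq[n]$ with $S\notin\mathcal W$ and every proper subset $T\subsetneq S$ there exists $K$ with $|K|\le k$ such that $T\setminus K\notin\mathcal W$; quasi-monotonic means 1-monotonic. Asymmetric reciprocal strong YES-quarrel between $i$ and $j$: for every $S\subseteq[n]\setminus\{i,j\}$, $S\cup\{i,j\}\in\hat{\mathcal W}\iff S\in\mathcal W$; $S\cup\{i\}\in\hat{\mathcal W}\iff S\cup\{i\}\in\mathcal W$; $S\cup\{j\}\in\hat{\mathcal W}\iff S\cup\{j\}\in\mathcal W$; $S\in\hat{\mathcal W}\iff S\in\mathcal W$. *)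

theory Defs
  imports Main
begin

definition game :: "nat \<Rightarrow> nat set set \<Rightarrow> bool" where
  "game n W \<longleftrightarrow> W \<subseteq> Pow {1..n}"

definition monotonic :: "nat \<Rightarrow> nat set set \<Rightarrow> bool" where
  "monotonic n W \<longleftrightarrow>
     (\<forall>S T. S \<subseteq> {1..n} \<longrightarrow> T \<subseteq> S \<longrightarrow> T \<in> W \<longrightarrow> S \<in> W)"

definition k_monotonic :: "nat \<Rightarrow> nat \<Rightarrow> nat set set \<Rightarrow> bool" where
  "k_monotonic k n W \<longleftrightarrow>
     (\<forall>S T. S \<subseteq> {1..n} \<longrightarrow> S \<notin> W \<longrightarrow> T \<subset> S \<longrightarrow>
        (\<exists>K. finite K \<and> card K \<le> k \<and> T - K \<notin> W))"

definition quasi_monotonic :: "nat \<Rightarrow> nat set set \<Rightarrow> bool" where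
  "quasi_monotonic n W \<longleftrightarrow> k_monotonic 1 n W"

text \<open>The game obtained from W by imposing an asymmetric reciprocal strong
  YES-quarrel between i and j, as a set of coalitions of {1..n}:
  for S \<subseteq> [n]-{i,j}: S\<union>{i,j} wins iff S wins; every other coalition
  keeps its original outcome.\<close>

definition asym_recip_strong_yes_quarrel ::
  "nat \<Rightarrow> nat set set \<Rightarrow> nat \<Rightarrow> nat \<Rightarrow> nat set set" where
  "asym_recip_strong_yes_quarrel n W i j =
     {S. S \<subseteq> {1..n} \<and>
         (if i \<in> S \<and> j \<in> S then S - {i, j} \<in> W else S \<in> W)}"

end

theory Submission
  imports Defs
begin

lemma Q_iff: "X \<in> asym_recip_strong_yes_quarrel n W i j \<longleftrightarrow>
   X \<subseteq> {1..n} \<and> (if i \<in> X \<and> j \<in> X then X - {i, j} \<in> W else X \<in> W)"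
  unfolding asym_recip_strong_yes_quarrel_def by simp

theorem theorem7:
  fixes n i j :: nat and W :: "nat set set"
  assumes "game n W"
    and "monotonic n W"
    and "i \<in> {1..n}" and "j \<in> {1..n}" and "i \<noteq> j"
  shows "quasi_monotonic n (asym_recip_strong_yes_quarrel n W i j)"
  unfolding quasi_monotonic_def k_monotonic_def
proof (intro allI impI)
  fix S T assume S: "S \<subseteq> {1..n}" and nS: "S \<notin> asym_recip_strong_yes_quarrel n W i j"
    and TS: "T \<subset> S"
  have mono: "\<And>A B. A \<subseteq> {1..n} \<Longrightarrow> B \<subseteq> A \<Longrightarrow> A \<notin> W \<Longrightarrow> B \<notin> W"
    using assms(2) unfolding monotonic_def by blast
  let ?Q = "asym_recip_strong_yes_quarrel n W i j"
  show "\<exists>K. finite K \<and> card K \<le> 1 \<and> T - K \<notin> ?Q"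
  proof (cases "i \<in> S \<and> j \<in> S")
    case False
    hence "S \<notin> W" using nS S by (auto simp add: Q_iff split: if_splits)
    moreover have "T \<subseteq> S" using TS by (rule psubset_imp_subset)
    ultimately have "T \<notin> W" using mono[OF S] by simp
    moreover have "\<not> (i \<in> T \<and> j \<in> T)" using False \<open>T \<subseteq> S\<close> by blast
    ultimately have "T - {} \<notin> ?Q" by (auto simp add: Q_iff split: if_splits)
    thus ?thesis by (intro exI[of _ "{}"]) simp
  next
    case True
    hence SW: "S - {i,j} \<notin> W" using nS S by (auto simp add: Q_iff split: if_splits)
    have SS: "S - {i,j} \<subseteq> {1..n}" using S by blast
    have TS': "T \<subseteq> S" using TS by (rule psubset_imp_subset)
    show ?thesis
    proof (cases "i \<in> T \<and> j \<in> T")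
      case True
      have "T - {i,j} \<subseteq> S - {i,j}" using TS' by blast
      hence "T - {i,j} \<notin> W" using mono[OF SS _ SW] by simp
      hence "T - {} \<notin> ?Q" using True by (auto simp add: Q_iff split: if_splits)
      thus ?thesis by (intro exI[of _ "{}"]) simp
    next
      case F: False
      show ?thesis
      proof (cases "i \<in> T")
        case False
        have "T - {j} \<subseteq> S - {i,j}" using TS' False by blast
        hence "T - {j} \<notin> W" using mono[OF SS _ SW] by simp
        hence "T - {j} \<notin> ?Q" using False by (auto simp add: Q_iff split: if_splits)
        thus ?thesis by (intro exI[of _ "{j}"]) simp
      next
        case True
        hence nj: "j \<notin> T" using F by blast
        have "T - {i} \<subseteq> S - {i,j}" using TS' nj by blast
        hence "T - {i} \<notin> W" using mono[OF SS _ SW] by simp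
        hence "T - {i} \<notin> ?Q" using nj by (auto simp add: Q_iff split: if_splits)
        thus ?thesis by (intro exI[of _ "{i}"]) simp
      qed
    qed
  qed
qed

end
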